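(* Let $L\ge2$, $k\ge2$ be integers, $\kappa:\{1,\dots,k-1\}\times\mathbb{N}\to\{0,\dots,L-1\}$ a map, and $(a(n))_{n=0}^\infty$ an $(L,k,\kappa)$-TM sequence. Then the $(L,k,\kappa)$-TM sequence is $n$-period if and only if $(a(n))_{n=0}^\infty$ is a $k$-automatic sequence.
   Context: $\mathbb{N}$ is the set of non-negative integers. Let $a_0,\dots,a_{L-1}$ be pairwise distinct complex numbers and $f$ the map on $\{a_0,\dots,a_{L-1}\}$ with $f(a_i)=a_{i+1}$ (indices mod $L$), extended letterwise to words, with iterates $f^j$, $f^0=\mathrm{id}$. Define $A_0=a_0$, $A_{n+1}=A_n\,f^{\kappa(1,n)}(A_n)\cdots f^{\kappa(k-1,n)}(A_n)$ (concatenation); the limit infinite word, indexed from $0$, is the $(L,k,\kappa)$-TM sequence. It is called $n$-period if there exist integers $N\ge0$ and $t>0$ with $\kappa(s,n)=\kappa(s,n+t)$ for all $1\le s\le k-1$ and all $n\ge N$. The $k$-kernel of a sequence $(a(n))$ is the set of subsequences $(a(k^en+j))_{n=0}^\infty$ with $e\ge0$, $0\le j\le k^e-1$; the sequence is $k$-automatic if its $k$-kernel is finite. *)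

theory Defs
  imports Complex_Main
begin

definition tm_f :: "nat \<Rightarrow> (nat \<Rightarrow> complex) \<Rightarrow> complex \<Rightarrow> complex" where
  "tm_f L a x = a (((THE i. i < L \<and> a i = x) + 1) mod L)"

fun tm_A :: "nat \<Rightarrow> nat \<Rightarrow> (nat \<Rightarrow> nat \<Rightarrow> nat) \<Rightarrow> (nat \<Rightarrow> complex) \<Rightarrow> nat \<Rightarrow> complex list" where
  "tm_A L k \<kappa> a 0 = [a 0]"
| "tm_A L k \<kappa> a (Suc n) =
     tm_A L k \<kappa> a n @ concat (map (\<lambda>s. map ((tm_f L a) ^^ (\<kappa> s n)) (tm_A L k \<kappa> a n)) [1..<k])"

definition n_period :: "nat \<Rightarrow> (nat \<Rightarrow> nat \<Rightarrow> nat) \<Rightarrow> bool" where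
  "n_period k \<kappa> \<longleftrightarrow> (\<exists>N t. t > 0 \<and> (\<forall>s \<in> {1..k-1}. \<forall>n \<ge> N. \<kappa> s n = \<kappa> s (n + t)))"

definition k_kernel :: "nat \<Rightarrow> (nat \<Rightarrow> 'a) \<Rightarrow> (nat \<Rightarrow> 'a) set" where
  "k_kernel k x = {(\<lambda>n. x (k ^ e * n + j)) | e j. j < k ^ e}"

definition k_automatic :: "nat \<Rightarrow> (nat \<Rightarrow> 'a) \<Rightarrow> bool" where
  "k_automatic k x \<longleftrightarrow> finite (k_kernel k x)"

end

theory Submission
  imports Defs
begin

definition dig :: "(nat \<Rightarrow> nat \<Rightarrow> nat) \<Rightarrow> nat \<Rightarrow> nat \<Rightarrow> nat" where
  "dig \<kappa> d p = (if d = 0 then 0 else \<kappa> d p)"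

function cc :: "nat \<Rightarrow> (nat \<Rightarrow> nat \<Rightarrow> nat) \<Rightarrow> nat \<Rightarrow> nat \<Rightarrow> nat" where
  "cc k \<kappa> p m = (if m = 0 \<or> k < 2 then 0 else dig \<kappa> (m mod k) p + cc k \<kappa> (Suc p) (m div k))"
  by auto
termination by (relation "measure (\<lambda>(k,\<kappa>,p,m). m)") auto

declare cc.simps[simp del]

lemma cc_zero[simp]: "cc k \<kappa> p 0 = 0"
  by (simp add: cc.simps)

lemma cc_step: "k \<ge> 2 \<Longrightarrow> cc k \<kappa> p m = dig \<kappa> (m mod k) p + cc k \<kappa> (Suc p) (m div k)"
  by (cases "m = 0") (auto simp: cc.simps[of k \<kappa> p m] dig_def)

lemma cc_digit: "k \<ge> 2 \<Longrightarrow> 0 < s \<Longrightarrow> s < k \<Longrightarrow> cc k \<kappa> p s = \<kappa> s p"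
  using cc_step[of k \<kappa> p s] by (simp add: dig_def)

lemma cc_split: "k \<ge> 2 \<Longrightarrow> j < k^e \<Longrightarrow> cc k \<kappa> p (k^e*n + j) = cc k \<kappa> p j + cc k \<kappa> (p+e) n"
proof (induction e arbitrary: p j)
  case 0
  then show ?case by simp
next
  case (Suc e)
  have k0: "k > 0" using Suc.prems by simp
  have m1: "(k^(Suc e)*n + j) mod k = j mod k"
    by (simp add: mult.assoc)
  have m2: "(k^(Suc e)*n + j) div k = k^e*n + j div k"
    using k0 by (simp add: mult.assoc)
  have jd: "j div k < k^e"
    using Suc.prems by (simp add: div_less_iff_less_mult mult.commute)
  have "cc k \<kappa> p (k^(Suc e)*n + j) = dig \<kappa> (j mod k) p + cc k \<kappa> (Suc p) (k^e*n + j div k)"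
    using cc_step[OF Suc.prems(1), of \<kappa> p "k^(Suc e)*n + j"] m1 m2 by simp
  also have "\<dots> = dig \<kappa> (j mod k) p + cc k \<kappa> (Suc p) (j div k) + cc k \<kappa> (Suc p + e) n"
    using Suc.IH[OF Suc.prems(1) jd] by simp
  also have "\<dots> = cc k \<kappa> p j + cc k \<kappa> (p + Suc e) n"
    using cc_step[OF Suc.prems(1), of \<kappa> p j] by simp
  finally show ?case .
qed

lemma concat_blocks:
  "a \<le> b \<Longrightarrow> concat (map (\<lambda>s. map (\<lambda>r. g (l*s + r)) [0..<l]) [a..<b]) = map g [l*a..<l*b]"
proof (induction b)
  case 0
  then show ?case by simp
next
  case (Suc b)
  show ?case
  proof (cases "a = Suc b")
    case True
    then show ?thesis by simp
  next
    case False
    then have ab: "a \<le> b" using Suc.prems by simp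
    have e1: "map (\<lambda>r. g (l*b + r)) [0..<l] = map g [l*b..<l*b + l]"
    proof -
      have "map (\<lambda>r. g (l*b + r)) [0..<l] = map g (map (\<lambda>r. r + l*b) [0..<l])"
        by (simp add: add.commute)
      also have "\<dots> = map g [l*b..<l*b + l]" by (simp only: map_add_upt add.commute)
      finally show ?thesis .
    qed
    have e2: "[l*a..<l*b] @ [l*b..<l*b + l] = [l*a..<l*b + l]"
      using upt_add_eq_append[of "l*a" "l*b" l] ab by simp
    have "concat (map (\<lambda>s. map (\<lambda>r. g (l*s + r)) [0..<l]) [a..<Suc b])
        = concat (map (\<lambda>s. map (\<lambda>r. g (l*s + r)) [0..<l]) [a..<b]) @ map (\<lambda>r. g (l*b + r)) [0..<l]"
      using ab by simp
    also have "\<dots> = map g [l*a..<l*b] @ map g [l*b..<l*b + l]" using Suc.IH[OF ab] e1 by simp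
    also have "\<dots> = map g ([l*a..<l*b] @ [l*b..<l*b + l])" by simp
    also have "\<dots> = map g [l*a..<l*Suc b]" using e2 by (simp add: add.commute)
    finally show ?thesis .
  qed
qed

lemma fstep:
  assumes "L > 0" "inj_on a {..<L}"
  shows "tm_f L a (a (i mod L)) = a (Suc i mod L)"
proof -
  have "(THE i'. i' < L \<and> a i' = a (i mod L)) = i mod L"
    using assms by (auto intro!: the_equality dest: inj_onD)
  then show ?thesis unfolding tm_f_def by (simp add: mod_Suc_eq)
qed

lemma fpow:
  assumes "L > 0" "inj_on a {..<L}"
  shows "(tm_f L a ^^ j) (a (i mod L)) = a ((i + j) mod L)"
proof (induction j)
  case 0
  then show ?case by simp
next
  case (Suc j)
  have "(tm_f L a ^^ Suc j) (a (i mod L)) = tm_f L a (a ((i + j) mod L))"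
    using Suc by simp
  also have "\<dots> = a (Suc (i+j) mod L)" using fstep[OF assms] by simp
  finally show ?case by simp
qed

theorem proposition5p1:
  fixes L k :: nat and \<kappa> :: "nat \<Rightarrow> nat \<Rightarrow> nat" and a :: "nat \<Rightarrow> complex"
    and x :: "nat \<Rightarrow> complex"
  assumes "L \<ge> 2" and "k \<ge> 2"
    and "inj_on a {..<L}"
    and "\<forall>s \<in> {1..k-1}. \<forall>n. \<kappa> s n < L"
    and "\<forall>n m. m < length (tm_A L k \<kappa> a n) \<longrightarrow> x m = tm_A L k \<kappa> a n ! m"
  shows "n_period k \<kappa> \<longleftrightarrow> k_automatic k x"
proof -
  have L0: "L > 0" using assms(1) by simp
  have k2: "k \<ge> 2" by fact
  define X where "X = (\<lambda>m. a (cc k \<kappa> 0 m mod L))"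
  have A: "tm_A L k \<kappa> a n = map X [0..<k^n]" for n
  proof (induction n)
    case 0
    then show ?case by (simp add: X_def)
  next
    case (Suc n)
    have inner: "map (\<lambda>s. map ((tm_f L a) ^^ (\<kappa> s n)) (map X [0..<k^n])) [1..<k]
        = map (\<lambda>s. map (\<lambda>r. X (k^n*s + r)) [0..<k^n]) [1..<k]"
    proof -
      have pt: "((tm_f L a) ^^ (\<kappa> s n)) (X r) = X (k^n*s + r)" if s: "1 \<le> s" "s < k" and r: "r < k^n" for s r
      proof -
        have "((tm_f L a) ^^ (\<kappa> s n)) (X r) = a ((cc k \<kappa> 0 r + \<kappa> s n) mod L)"
          using fpow[OF L0 assms(3)] by (simp add: X_def)
        also have "cc k \<kappa> 0 r + \<kappa> s n = cc k \<kappa> 0 (k^n*s + r)"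
          using cc_split[OF k2, of r n \<kappa> 0 s] cc_digit[OF k2, of s \<kappa> n] s r by simp
        finally show ?thesis by (simp add: X_def)
      qed
      show ?thesis by (auto simp: pt cong: map_cong)
    qed
    have cb: "concat (map (\<lambda>s. map (\<lambda>r. X (k^n*s + r)) [0..<k^n]) [1..<k]) = map X [k^n..<k^n*k]"
      using concat_blocks[of 1 k X "k^n"] k2 by simp
    have ap: "[0..<k^n] @ [k^n..<k^n*k] = [0..<k^Suc n]"
    proof -
      have "k^n*k = k^n + k^n*(k-1)" using k2 by (cases k) (simp_all add: algebra_simps)
      then show ?thesis using upt_add_eq_append[of 0 "k^n" "k^n*(k-1)"] by (simp add: mult.commute)
    qed
    have "tm_A L k \<kappa> a (Suc n) = map X [0..<k^n] @
        concat (map (\<lambda>s. map ((tm_f L a) ^^ (\<kappa> s n)) (map X [0..<k^n])) [1..<k])"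
      using Suc.IH by (simp del: upt_Suc)
    also have "\<dots> = map X [0..<k^n] @ map X [k^n..<k^n*k]" by (simp only: inner cb)
    also have "\<dots> = map X ([0..<k^n] @ [k^n..<k^n*k])" by (simp del: upt_Suc)
    also have "\<dots> = map X [0..<k^Suc n]" using ap by (simp del: upt_Suc)
    finally show ?case .
  qed
  have xX: "x = X"
  proof
    fix m
    have "m < 2^m" by simp
    also have "(2::nat)^m \<le> k^m" using k2 by (simp add: power_mono)
    finally have "m < length (tm_A L k \<kappa> a m)" using A by simp
    then show "x m = X m" using assms(5) A by simp
  qed
  have kerel: "(\<lambda>n. x (k^e*n + j)) = (\<lambda>n. a ((cc k \<kappa> 0 j + cc k \<kappa> e n) mod L))" if "j < k^e" for e j
    using cc_split[OF k2 that, of \<kappa> 0] by (simp add: xX X_def)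
  have xk: "x (k^p * s) = a (\<kappa> s p)" if "s \<in> {1..k-1}" for s p
  proof -
    have "x (k^p * s) = x (k^p*s + 0)" by simp
    also have "\<dots> = a ((cc k \<kappa> 0 0 + cc k \<kappa> p s) mod L)" using fun_cong[OF kerel[of 0 p], of s] k2 by simp
    also have "\<dots> = a (\<kappa> s p)" using cc_digit[OF k2, of s \<kappa> p] that assms(4) by auto
    finally show ?thesis .
  qed
  show ?thesis
  proof
    assume "n_period k \<kappa>"
    then obtain N t where t: "t > 0" and per: "\<forall>s \<in> {1..k-1}. \<forall>n \<ge> N. \<kappa> s n = \<kappa> s (n + t)"
      unfolding n_period_def by blast
    have per1: "cc k \<kappa> (e+t) m = cc k \<kappa> e m" if "e \<ge> N" for e m
      using that
    proof (induction m arbitrary: e rule: less_induct)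
      case (less m)
      show ?case
      proof (cases "m = 0")
        case True then show ?thesis by simp
      next
        case False
        have d: "dig \<kappa> (m mod k) (e+t) = dig \<kappa> (m mod k) e"
        proof (cases "m mod k = 0")
          case True then show ?thesis by (simp add: dig_def)
        next
          case False
          have "m mod k \<in> {1..k-1}" proof -
            have "m mod k < k" using k2 by simp
            then show ?thesis using False by simp
          qed
          then have "\<kappa> (m mod k) e = \<kappa> (m mod k) (e+t)" using per less.prems by blast
          then show ?thesis by (simp add: dig_def)
        qed
        have "m div k < m" using False k2 by simp
        then have "cc k \<kappa> (Suc e + t) (m div k) = cc k \<kappa> (Suc e) (m div k)"
          using less.IH[of "m div k" "Suc e"] less.prems by simp
        then show ?thesis using d cc_step[OF k2, of \<kappa> "e+t" m] cc_step[OF k2, of \<kappa> e m] by simp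
      qed
    qed
    have per2: "cc k \<kappa> (e + i*t) = cc k \<kappa> e" if "e \<ge> N" for e i
    proof (induction i)
      case 0 then show ?case by simp
    next
      case (Suc i)
      have "cc k \<kappa> (e + Suc i*t) = cc k \<kappa> ((e + i*t) + t)" by (simp add: algebra_simps)
      also have "\<dots> = cc k \<kappa> (e + i*t)" using per1 that by (intro ext) simp
      finally show ?case using Suc by simp
    qed
    have red: "\<exists>e'<N+t. cc k \<kappa> e = cc k \<kappa> e'" for e
    proof (cases "e < N")
      case True then show ?thesis by (intro exI[of _ e]) simp
    next
      case False
      define e' where "e' = N + (e-N) mod t"
      define q where "q = (e-N) div t"
      have "e = e' + q*t" using False mod_div_mult_eq[of "e-N" t] unfolding e'_def q_def by linarith
      moreover have "N \<le> e'" unfolding e'_def by simp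
      ultimately have "cc k \<kappa> e = cc k \<kappa> e'" using per2[of e' q] by simp
      moreover have "e' < N+t" using t unfolding e'_def by simp
      ultimately show ?thesis by blast
    qed
    have sub: "k_kernel k x \<subseteq> (\<lambda>(c,e). (\<lambda>n. a ((c + cc k \<kappa> e n) mod L))) ` ({..<L} \<times> {..<N+t})"
    proof
      fix y assume "y \<in> k_kernel k x"
      then obtain e j where j: "j < k^e" and y: "y = (\<lambda>n. x (k^e*n + j))"
        unfolding k_kernel_def by blast
      obtain e' where e': "e' < N+t" "cc k \<kappa> e = cc k \<kappa> e'" using red by blast
      have yy: "y = (\<lambda>n. a ((cc k \<kappa> 0 j mod L + cc k \<kappa> e' n) mod L))"
        using kerel[OF j] y e'(2) by (simp add: mod_add_left_eq)
      show "y \<in> (\<lambda>(c,e). (\<lambda>n. a ((c + cc k \<kappa> e n) mod L))) ` ({..<L} \<times> {..<N+t})"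
        by (rule image_eqI[where x="(cc k \<kappa> 0 j mod L, e')"]) (simp_all add: yy L0 e'(1))
    qed
    show "k_automatic k x" unfolding k_automatic_def
      by (rule finite_subset[OF sub], intro finite_imageI finite_cartesian_product) simp_all
  next
    assume "k_automatic k x"
    then have fin: "finite (k_kernel k x)" unfolding k_automatic_def .
    define K where "K = (\<lambda>e. (\<lambda>n. x (k^e*n)))"
    have "range K \<subseteq> k_kernel k x"
    proof
      fix y assume "y \<in> range K"
      then obtain e where y: "y = K e" by blast
      have "y = (\<lambda>n. x (k^e*n + 0)) \<and> (0::nat) < k^e" using k2 y unfolding K_def by simp
      then show "y \<in> k_kernel k x" unfolding k_kernel_def by blast
    qed
    then have "finite (range K)" using fin finite_subset by blast
    then have "\<not> inj K"
    proof (intro notI)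
      assume "inj K" "finite (range K)"
      then have "finite (UNIV::nat set)" using finite_imageD by blast
      then show False by simp
    qed
    then obtain e1 e2 where "e1 \<noteq> e2" "K e1 = K e2" unfolding inj_def by blast
    then obtain e e' where ee: "e < e'" "K e = K e'"
    proof (cases "e1 < e2")
      case True then show ?thesis using that \<open>K e1 = K e2\<close> by blast
    next
      case False
      then have "e2 < e1" using \<open>e1 \<noteq> e2\<close> by simp
      then show ?thesis using that \<open>K e1 = K e2\<close> by (metis)
    qed
    show "n_period k \<kappa>" unfolding n_period_def
    proof (rule exI[of _ e], rule exI[of _ "e'-e"], intro conjI ballI allI impI)
      show "e' - e > 0" using ee by simp
      fix s n assume s: "s \<in> {1..k-1}" and n: "e \<le> n"
      define i where "i = n - e"
      have "K e (s*k^i) = K e' (s*k^i)" using ee by simp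
      then have "x (k^(e+i)*s) = x (k^(e'+i)*s)"
        unfolding K_def by (simp add: power_add algebra_simps)
      then have "a (\<kappa> s (e+i)) = a (\<kappa> s (e'+i))" using xk s by simp
      then have "\<kappa> s (e+i) = \<kappa> s (e'+i)"
        using assms(3,4) s by (auto dest: inj_onD)
      moreover have "e+i = n" "e'+i = n + (e'-e)" using n ee unfolding i_def by auto
      ultimately show "\<kappa> s n = \<kappa> s (n + (e'-e))" by simp
    qed
  qed
qed

end
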